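(* Let $(x_j)$ be a bounded sequence in a Banach space $X$ having a weak$^*$-cluster point $G\in X^{**}\setminus X$, and let $d=\operatorname{dist}(G,X)$. Set $\gamma=\max\{\frac1d,\frac{\|G\|+d}{2d},\sup_j\|x_j\|\}$. Then for every $\varepsilon>0$, $(x_j)$ has a $(\gamma+\varepsilon)$-wide-$(s)$ subsequence.
   Context: $X\subset X^{**}$ canonically; $\operatorname{dist}(G,X)=\inf_{x\in X}\|G-x\|$. A sequence $(b_j)$ is $\mu$-basic if $\|\sum_{j=1}^k c_jb_j\|\le\mu\|\sum_j c_jb_j\|$ for all $k$ and scalars $(c_j)$ with $\sum_jc_jb_j$ convergent. For $\lambda\ge1$, a finite or infinite sequence $(b_j)$ is $\lambda$-wide-$(s)$ if (a) it is $2\lambda$-basic; (b) $\|b_j\|\le\lambda$ for all $j$; (c) $|\sum_{j=k}^n c_j|\le\lambda\|\sum_{j=1}^n c_jb_j\|$ for all $1\le k\le n$ (within the length of the sequence) and scalars $c_1,\dots,c_n$. *)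

theory Defs
  imports "HOL-Analysis.Analysis"
begin

definition canon :: "'a::real_normed_vector \<Rightarrow> (('a \<Rightarrow>\<^sub>L real) \<Rightarrow>\<^sub>L real)" where
  "canon x = Blinfun (\<lambda>f. blinfun_apply f x)"

definition dist_to_X :: "(('a::real_normed_vector \<Rightarrow>\<^sub>L real) \<Rightarrow>\<^sub>L real) \<Rightarrow> real" where
  "dist_to_X G = (INF x. norm (G - canon x))"

text \<open>G is a weak*-cluster point of the sequence (canon (x j)): every basic weak*
  neighbourhood of G (finitely many functionals, radius e) contains x j for infinitely many j.\<close>
definition weak_star_cluster_point ::
  "(nat \<Rightarrow> 'a::real_normed_vector) \<Rightarrow> (('a \<Rightarrow>\<^sub>L real) \<Rightarrow>\<^sub>L real) \<Rightarrow> bool" where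
  "weak_star_cluster_point x G \<longleftrightarrow>
     (\<forall>F e N. finite F \<and> e > 0 \<longrightarrow>
        (\<exists>j\<ge>N. \<forall>f\<in>F. \<bar>blinfun_apply f (x j) - blinfun_apply G f\<bar> < e))"

definition is_basic :: "real \<Rightarrow> (nat \<Rightarrow> 'a::real_normed_vector) \<Rightarrow> bool" where
  "is_basic \<mu> b \<longleftrightarrow>
     (\<forall>c::nat \<Rightarrow> real. summable (\<lambda>j. c j *\<^sub>R b j) \<longrightarrow>
        (\<forall>k. norm (\<Sum>j<k. c j *\<^sub>R b j) \<le> \<mu> * norm (\<Sum>j. c j *\<^sub>R b j)))"

text \<open>Wide-(s) sequences (0-indexed).\<close>
definition wide_s :: "real \<Rightarrow> (nat \<Rightarrow> 'a::real_normed_vector) \<Rightarrow> bool" where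
  "wide_s lam b \<longleftrightarrow>
     is_basic (2 * lam) b \<and>
     (\<forall>j. norm (b j) \<le> lam) \<and>
     (\<forall>c::nat \<Rightarrow> real. \<forall>k n. k \<le> n \<longrightarrow>
        \<bar>\<Sum>j=k..n. c j\<bar> \<le> lam * norm (\<Sum>j\<le>n. c j *\<^sub>R b j))"

end

theory Submission
  imports Defs
begin


lemma hb_norm:
  fixes x0 :: "'a::real_normed_vector"
  shows "\<exists>f::'a \<Rightarrow>\<^sub>L real. norm f \<le> 1 \<and> blinfun_apply f x0 = norm x0"
proof -
  define g0 :: "('a \<times> real) set" where "g0 = span {(x0, norm x0)}"
  define A where "A = {g :: ('a \<times> real) set. subspace g \<and> (\<forall>x a b. (x,a)\<in>g \<longrightarrow> (x,b)\<in>g \<longrightarrow> a = b)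
      \<and> (\<forall>x a. (x,a)\<in>g \<longrightarrow> a \<le> norm x) \<and> g0 \<subseteq> g}"
  have g0A: "g0 \<in> A"
  proof -
    have sp: "g0 = range (\<lambda>t. (t *\<^sub>R x0, t * norm x0))"
      unfolding g0_def span_singleton by auto
    have "(\<forall>x a b. (x,a)\<in>g0 \<longrightarrow> (x,b)\<in>g0 \<longrightarrow> a = b)"
    proof (intro allI impI)
      fix x a b assume "(x,a)\<in>g0" "(x,b)\<in>g0"
      then obtain t t' where "x = t *\<^sub>R x0" "a = t * norm x0" "x = t' *\<^sub>R x0" "b = t' * norm x0"
        unfolding sp by blast
      then show "a = b"
        by (metis mult_zero_right norm_zero real_vector.scale_right_imp_eq)
    qed
    moreover have "\<forall>x a. (x,a)\<in>g0 \<longrightarrow> a \<le> norm x"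
      unfolding sp by clarsimp (rule mult_right_mono, auto)
    ultimately show ?thesis unfolding A_def g0_def by (auto simp: subspace_span)
  qed
  have "\<exists>M\<in>A. \<forall>X\<in>A. M \<subseteq> X \<longrightarrow> X = M"
  proof (rule subset_Zorn_nonempty)
    show "A \<noteq> {}" using g0A by auto
  next
    fix C assume Cne: "C \<noteq> {}" and ch: "subset.chain A C"
    have CA: "C \<subseteq> A" and chn: "\<And>X Y. X\<in>C \<Longrightarrow> Y\<in>C \<Longrightarrow> X \<subseteq> Y \<or> Y \<subseteq> X"
      using ch unfolding subset.chain_def by auto
    have two: "\<exists>Z\<in>C. p \<in> Z \<and> q \<in> Z" if "p \<in> \<Union>C" "q \<in> \<Union>C" for p q
      using that chn by blast
    have "subspace (\<Union>C)"
      unfolding subspace_def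
    proof (intro conjI ballI allI)
      obtain X where "X \<in> C" using Cne by auto
      then show "0 \<in> \<Union>C" using CA unfolding A_def subspace_def by auto
    next
      fix p q assume "p \<in> \<Union>C" "q \<in> \<Union>C"
      then obtain Z where "Z\<in>C" "p\<in>Z" "q\<in>Z" using two by blast
      then show "p + q \<in> \<Union>C" using CA unfolding A_def subspace_def by blast
    next
      fix c and p assume "p \<in> \<Union>C"
      then obtain Z where "Z\<in>C" "p\<in>Z" by blast
      then show "c *\<^sub>R p \<in> \<Union>C" using CA unfolding A_def subspace_def by blast
    qed
    moreover have "\<forall>x a b. (x,a)\<in>\<Union>C \<longrightarrow> (x,b)\<in>\<Union>C \<longrightarrow> a = b"
    proof (intro allI impI)
      fix x a b assume "(x,a)\<in>\<Union>C" "(x,b)\<in>\<Union>C"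
      then obtain Z where "Z\<in>C" "(x,a)\<in>Z" "(x,b)\<in>Z" using two by blast
      then show "a = b" using CA unfolding A_def by blast
    qed
    moreover have "\<forall>x a. (x,a)\<in>\<Union>C \<longrightarrow> a \<le> norm x"
      using CA unfolding A_def by blast
    moreover have "g0 \<subseteq> \<Union>C" using CA Cne unfolding A_def by blast
    ultimately show "\<Union>C \<in> A" unfolding A_def by blast
  qed
  then obtain M where MA: "M \<in> A" and Mmax: "\<And>X. X\<in>A \<Longrightarrow> M \<subseteq> X \<Longrightarrow> X = M" by blast
  have Msub: "subspace M" and Mfun: "\<And>x a b. (x,a)\<in>M \<Longrightarrow> (x,b)\<in>M \<Longrightarrow> a = b"
    and Mdom: "\<And>x a. (x,a)\<in>M \<Longrightarrow> a \<le> norm x" and g0M: "g0 \<subseteq> M"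
    using MA unfolding A_def by auto
  have Madd: "(x+y, a+b) \<in> M" if "(x,a)\<in>M" "(y,b)\<in>M" for x y a b
    using Msub that unfolding subspace_def by (metis add_Pair)
  have Mscale: "(c *\<^sub>R x, c * a) \<in> M" if "(x,a)\<in>M" for x a c
    using Msub that unfolding subspace_def by (metis scaleR_Pair real_scaleR_def)
  have M0: "(0,0) \<in> M" using Msub unfolding subspace_def by (simp add: zero_prod_def)
  have total: "\<exists>a. (x1,a) \<in> M" for x1
  proof (rule ccontr)
    assume nx: "\<not> (\<exists>a. (x1,a) \<in> M)"
    have key: "a - norm (y - x1) \<le> norm (z + x1) - b" if "(y,a)\<in>M" "(z,b)\<in>M" for y a z b
    proof -
      have "a + b \<le> norm (y + z)" using Mdom[OF Madd[OF that]] .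
      also have "\<dots> \<le> norm (y - x1) + norm (z + x1)"
        using norm_triangle_ineq[of "y - x1" "z + x1"] by simp
      finally show ?thesis by simp
    qed
    define c where "c = (SUP p\<in>M. snd p - norm (fst p - x1))"
    have bdd: "bdd_above ((\<lambda>p. snd p - norm (fst p - x1)) ` M)"
      using key[OF _ M0] by (auto intro!: bdd_aboveI2[where M="norm x1"])
    have cup: "a - norm (y - x1) \<le> c" if "(y,a)\<in>M" for y a
      unfolding c_def using cSUP_upper[OF that bdd] by simp
    have clow: "c \<le> norm (z + x1) - b" if "(z,b)\<in>M" for z b
      unfolding c_def using that by (intro cSUP_least) (use M0 key in auto)
    define M' where "M' = {p + q |p q. p \<in> M \<and> q \<in> span {(x1, c)}}"
    have M'sub: "subspace M'" unfolding M'_def by (intro subspace_sums Msub subspace_span)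
    have M'el: "p \<in> M' \<longleftrightarrow> (\<exists>y a t. (y,a) \<in> M \<and> p = (y + t *\<^sub>R x1, a + t * c))" for p
      unfolding M'_def span_singleton by (force)
    have M'fun: "a = b" if h1: "(x,a)\<in>M'" and h2: "(x,b)\<in>M'" for x a b
    proof -
      obtain y a1 t where 1: "(y,a1)\<in>M" "x = y + t *\<^sub>R x1" "a = a1 + t * c" using h1[unfolded M'el] by blast
      obtain y' b1 t' where 2: "(y',b1)\<in>M" "x = y' + t' *\<^sub>R x1" "b = b1 + t' * c" using h2[unfolded M'el] by blast
      have "t = t'"
      proof (rule ccontr)
        assume "t \<noteq> t'"
        have "(y' - y, b1 - a1) \<in> M" using Madd[OF 2(1) Mscale[OF 1(1), of "-1"]] by simp
        then have "((1/(t - t')) *\<^sub>R (y' - y), (1/(t-t')) * (b1 - a1)) \<in> M" by (rule Mscale)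
        moreover have "(1/(t - t')) *\<^sub>R (y' - y) = x1"
        proof -
          have "y' - y = (t - t') *\<^sub>R x1" using 1(2) 2(2) by (simp add: algebra_simps)
          then show ?thesis using \<open>t \<noteq> t'\<close> by simp
        qed
        ultimately show False using nx by auto
      qed
      then have "y = y'" using 1(2) 2(2) by simp
      then show ?thesis using 1 2 Mfun \<open>t = t'\<close> by auto
    qed
    have M'dom: "a \<le> norm x" if h: "(x,a)\<in>M'" for x a
    proof -
      obtain y a1 t where 1: "(y,a1)\<in>M" "x = y + t *\<^sub>R x1" "a = a1 + t * c" using h[unfolded M'el] by blast
      consider "t = 0" | "t > 0" | "t < 0" by linarith
      then show ?thesis
      proof cases
        case 1 then show ?thesis using \<open>(y,a1)\<in>M\<close> \<open>x = _\<close> \<open>a = _\<close> Mdom by simp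
      next
        case 2
        have "(inverse t *\<^sub>R y, inverse t * a1) \<in> M" by (rule Mscale[OF 1(1)])
        from clow[OF this] have "inverse t * a1 + c \<le> norm (inverse t *\<^sub>R y + x1)" by simp
        then have "t * (inverse t * a1 + c) \<le> t * norm (inverse t *\<^sub>R y + x1)"
          using 2 by (intro mult_left_mono) auto
        also have "t * norm (inverse t *\<^sub>R y + x1) = norm (t *\<^sub>R (inverse t *\<^sub>R y + x1))"
          using 2 by simp
        also have "t *\<^sub>R (inverse t *\<^sub>R y + x1) = y + t *\<^sub>R x1"
          using 2 by (simp add: algebra_simps)
        finally show ?thesis using 1 2 by (simp add: algebra_simps)
      next
        case 3
        define s where "s = - t"
        have s: "s > 0" using 3 s_def by simp
        have "(inverse s *\<^sub>R y, inverse s * a1) \<in> M" by (rule Mscale[OF 1(1)])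
        from cup[OF this] have "inverse s * a1 - c \<le> norm (inverse s *\<^sub>R y - x1)" by simp
        then have "s * (inverse s * a1 - c) \<le> s * norm (inverse s *\<^sub>R y - x1)"
          using s by (intro mult_left_mono) auto
        also have "s * norm (inverse s *\<^sub>R y - x1) = norm (s *\<^sub>R (inverse s *\<^sub>R y - x1))"
          using s by simp
        also have "s *\<^sub>R (inverse s *\<^sub>R y - x1) = y + t *\<^sub>R x1"
          using s s_def by (simp add: algebra_simps)
        finally show ?thesis using 1 s s_def by (simp add: algebra_simps)
      qed
    qed
    have "M \<subseteq> M'"
    proof
      fix p assume "p \<in> M"
      then show "p \<in> M'" unfolding M'el by (cases p) (rule exI, rule exI, rule exI[where x=0], auto)
    qed
    moreover have "M' \<in> A" unfolding A_def using M'sub M'fun M'dom g0M \<open>M \<subseteq> M'\<close> by blast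
    ultimately have "M' = M" using Mmax by blast
    moreover have "(x1, c) \<in> M'" unfolding M'el using M0 by (intro exI[where x=0] exI[where x=1]) simp
    ultimately show False using nx by auto
  qed
  define f where "f x = (THE a. (x,a) \<in> M)" for x
  have fM: "(x, f x) \<in> M" for x
    unfolding f_def using total[of x] Mfun by (metis theI)
  have fval: "f x = a" if "(x,a)\<in>M" for x a using Mfun[OF that fM] by simp
  have fb: "\<bar>f x\<bar> \<le> norm x" for x
  proof -
    have "f x \<le> norm x" using Mdom[OF fM] .
    moreover have "(-x, - f x) \<in> M" using Mscale[OF fM, of "-1" x] by simp
    then have "- f x \<le> norm x" using Mdom by fastforce
    ultimately show ?thesis by simp
  qed
  have bl: "bounded_linear f"
  proof (rule bounded_linear_intro[where K=1])
    show "f (x + y) = f x + f y" for x y using fval[OF Madd[OF fM fM]] by simp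
    show "f (r *\<^sub>R x) = r *\<^sub>R f x" for r x using fval[OF Mscale[OF fM]] by simp
    show "norm (f x) \<le> norm x * 1" for x using fb by simp
  qed
  have "(x0, norm x0) \<in> M" using g0M unfolding g0_def by (meson span_base singletonI subsetD)
  then have "f x0 = norm x0" by (rule fval)
  moreover have "norm (Blinfun f) \<le> 1"
    by (rule norm_blinfun_bound) (use fb bl in \<open>auto simp: bounded_linear_Blinfun_apply\<close>)
  ultimately show ?thesis using bl by (intro exI[where x="Blinfun f"]) (simp add: bounded_linear_Blinfun_apply)
qed



lemma canon_apply[simp]: "blinfun_apply (canon x) f = blinfun_apply f x"
  unfolding canon_def by (simp add: bounded_linear_Blinfun_apply)

lemma canon_norm_le: "norm (canon x) \<le> norm x"
  proof (rule norm_blinfun_bound)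
  show "norm (blinfun_apply (canon x) f) \<le> norm x * norm f" for f
    using norm_blinfun[of f x] by (simp add: mult.commute)
qed simp

lemma bounded_linear_canon: "bounded_linear canon"
proof (rule bounded_linear_intro[where K=1])
  show "canon (x + y) = canon x + canon y" for x y
    by (rule blinfun_eqI) (simp add: blinfun.add_left blinfun.add_right)
  show "canon (r *\<^sub>R x) = r *\<^sub>R canon x" for r x
    by (rule blinfun_eqI) (simp add: blinfun.scaleR_left blinfun.scaleR_right)
  show "norm (canon x) \<le> norm x * 1" for x using canon_norm_le by simp
qed

lemma norm_canon[simp]: "norm (canon x) = norm x"
proof -
  obtain f where f: "norm f \<le> 1" "blinfun_apply f x = norm x" using hb_norm by blast
  have "norm x = blinfun_apply (canon x) f" using f by simp
  also have "\<dots> \<le> norm (canon x) * norm f" using norm_blinfun[of "canon x" f] by simp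
  also have "\<dots> \<le> norm (canon x)" using f(1) by (simp add: mult_left_le)
  finally show ?thesis using canon_norm_le[of x] by linarith
qed

lemma canon_sum: "canon (\<Sum>i\<in>I. h i) = (\<Sum>i\<in>I. canon (h i))"
  by (rule blinfun_eqI) (simp add: blinfun.sum_left blinfun.sum_right)

lemma canon_scale: "canon (r *\<^sub>R x) = r *\<^sub>R canon x"
  by (rule blinfun_eqI) (simp add: blinfun.scaleR_left blinfun.scaleR_right)

lemma canon_minus: "canon (- x) = - canon x"
  by (rule blinfun_eqI) (simp add: blinfun.minus_left blinfun.minus_right)

lemma dist_to_X_le: "dist_to_X G \<le> norm (G - canon x)"
  unfolding dist_to_X_def by (rule cINF_lower) (auto intro: bdd_belowI[where m=0])

lemma dist_to_X_nonneg: "dist_to_X G \<ge> 0"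
  unfolding dist_to_X_def by (rule cINF_greatest) auto

lemma dist_to_X_pos:
  fixes G :: "('a::banach \<Rightarrow>\<^sub>L real) \<Rightarrow>\<^sub>L real"
  assumes "G \<notin> range canon"
  shows "dist_to_X G > 0"
proof -
  have "complete (range (canon :: 'a \<Rightarrow> _))"
    using complete_isometric_image[of 1 UNIV canon] bounded_linear_canon complete_UNIV by simp
  then have cl: "closed (range (canon :: 'a \<Rightarrow> _))" by (rule complete_imp_closed)
  have "infdist G (range canon) > 0"
    by (rule infdist_pos_not_in_closed) (use cl assms in auto)
  moreover have "infdist G (range canon) = dist_to_X G"
    unfolding dist_to_X_def infdist_def by (simp add: image_image dist_norm)
  ultimately show ?thesis by simp
qed

lemma norming_single:
  fixes Y :: "('a::real_normed_vector \<Rightarrow>\<^sub>L real) \<Rightarrow>\<^sub>L real"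
  assumes "\<delta> > 0"
  shows "\<exists>f. norm f \<le> 1 \<and> blinfun_apply Y f \<ge> norm Y - \<delta>"
proof (rule ccontr)
  assume H: "\<not> ?thesis"
  have H': "blinfun_apply Y g < norm Y - \<delta>" if "norm g \<le> 1" for g
    using H that by (meson not_le)
  have "norm Y - \<delta> \<ge> 0" using H'[of 0] by simp
  have b: "\<bar>blinfun_apply Y f\<bar> \<le> (norm Y - \<delta>) * norm f" for f
  proof (cases "f = 0")
    case True then show ?thesis by simp
  next
    case False
    then have nf: "norm f > 0" by simp
    have 1: "blinfun_apply Y (inverse (norm f) *\<^sub>R f) < norm Y - \<delta>"
      using nf by (intro H') simp
    have 2: "blinfun_apply Y (- (inverse (norm f) *\<^sub>R f)) < norm Y - \<delta>"
      using nf by (intro H') simp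
    have "blinfun_apply Y f = norm f * blinfun_apply Y (inverse (norm f) *\<^sub>R f)"
      using nf by (simp add: blinfun.scaleR_right)
    moreover have "- blinfun_apply Y f = norm f * blinfun_apply Y (- (inverse (norm f) *\<^sub>R f))"
      using nf by (simp add: blinfun.scaleR_right blinfun.minus_right)
    ultimately show ?thesis using 1 2 nf
      by (smt (verit, best) mult.commute mult_strict_left_mono)
  qed
  have "norm Y \<le> norm Y - \<delta>"
    by (rule norm_blinfun_bound) (use b \<open>norm Y - \<delta> \<ge> 0\<close> in auto)
  then show False using assms by simp
qed



lemma norming_set:
  fixes g :: "nat \<Rightarrow> ('a::real_normed_vector \<Rightarrow>\<^sub>L real) \<Rightarrow>\<^sub>L real"
  assumes dpos: "\<delta> > 0"
  shows "\<exists>F. finite F \<and> (\<forall>f\<in>F. norm f \<le> 1) \<and>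
    (\<forall>a. (\<forall>i<m. \<bar>a i\<bar> \<le> 1) \<longrightarrow>
      (\<exists>f\<in>F. blinfun_apply (\<Sum>i<m. a i *\<^sub>R g i) f \<ge> norm (\<Sum>i<m. a i *\<^sub>R g i) - \<delta>))"
proof -
  define K where "K = (\<Sum>i<m. norm (g i))"
  have K0: "K \<ge> 0" unfolding K_def by (simp add: sum_nonneg)
  obtain N :: nat where N: "4 * K / \<delta> < real N" using reals_Archimedean2 by blast
  have Npos: "real N > 0" using N K0 dpos by (smt (verit) divide_nonneg_pos)
  have KN: "K / real N \<le> \<delta> / 4"
    using N Npos dpos by (simp add: field_simps)
  define w where "w q = (\<Sum>i<m. q i *\<^sub>R g i)" for q :: "nat \<Rightarrow> real"
  have "\<forall>q. \<exists>f. norm f \<le> 1 \<and> blinfun_apply (w q) f \<ge> norm (w q) - \<delta>/2"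
    using norming_single dpos by (metis half_gt_zero)
  then obtain fq where fq: "\<And>q. norm (fq q) \<le> 1" "\<And>q. blinfun_apply (w q) (fq q) \<ge> norm (w q) - \<delta>/2"
    by metis
  define Gr where "Gr = (\<lambda>z::int. real_of_int z / real N) ` {- int N..int N}"
  define Q where "Q = PiE {..<m} (\<lambda>_. Gr)"
  have "finite Q" unfolding Q_def Gr_def by (intro finite_PiE) auto
  show ?thesis
  proof (intro exI[where x="fq ` Q"] conjI allI impI)
    show "finite (fq ` Q)" using \<open>finite Q\<close> by simp
    show "\<forall>f\<in>fq ` Q. norm f \<le> 1" using fq by auto
  next
    fix a :: "nat \<Rightarrow> real" assume a: "\<forall>i<m. \<bar>a i\<bar> \<le> 1"
    define q where "q i = (if i < m then real_of_int (round (real N * a i)) / real N else undefined)" for i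
    have qQ: "q \<in> Q"
      unfolding Q_def
    proof (rule PiE_I)
      fix i assume "i \<in> {..<m}"
      then have im: "i < m" by simp
      have ai: "\<bar>real N * a i\<bar> \<le> real N" using a im Npos
        by (simp add: abs_mult mult_left_le)
      have r1: "real_of_int (round (real N * a i)) \<le> real N + 1/2"
        using of_int_round_le[of "real N * a i"] ai by linarith
      have r2: "real_of_int (round (real N * a i)) \<ge> - real N - 1/2"
        using of_int_round_ge[of "real N * a i"] ai by linarith
      have "round (real N * a i) \<in> {- int N..int N}" using r1 r2 by simp
      then show "q i \<in> Gr" unfolding Gr_def q_def using im by auto
    next
      fix i assume "i \<notin> {..<m}" then show "q i = undefined" unfolding q_def by simp
    qed
    have qa: "\<bar>a i - q i\<bar> \<le> 1 / real N" if "i < m" for i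
    proof -
      have "\<bar>real_of_int (round (real N * a i)) - real N * a i\<bar> \<le> 1/2" by (rule of_int_round_abs_le)
      then have "\<bar>q i - a i\<bar> * real N \<le> 1/2"
        using that Npos unfolding q_def by (simp add: field_simps abs_mult[symmetric] del: abs_mult)
      then show ?thesis using Npos by (simp add: field_simps abs_minus_commute)
    qed
    have "norm (w a - w q) = norm (\<Sum>i<m. (a i - q i) *\<^sub>R g i)"
      unfolding w_def by (simp add: sum_subtractf scaleR_diff_left)
    also have "\<dots> \<le> (\<Sum>i<m. norm ((a i - q i) *\<^sub>R g i))" by (rule norm_sum)
    also have "\<dots> \<le> (\<Sum>i<m. (1 / real N) * norm (g i))"
      proof (rule sum_mono)
      fix i assume "i \<in> {..<m}"
      then show "norm ((a i - q i) *\<^sub>R g i) \<le> (1 / real N) * norm (g i)"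
        using qa[of i] mult_right_mono[OF qa[of i] norm_ge_zero[of "g i"]] by simp
    qed
    also have "\<dots> = K / real N" unfolding K_def by (simp add: sum_divide_distrib)
    finally have close: "norm (w a - w q) \<le> \<delta>/4" using KN by linarith
    have "blinfun_apply (w a) (fq q) = blinfun_apply (w q) (fq q) + blinfun_apply (w a - w q) (fq q)"
      by (simp add: blinfun.diff_left)
    also have "blinfun_apply (w a - w q) (fq q) \<ge> - norm (w a - w q)"
    proof -
      have "\<bar>blinfun_apply (w a - w q) (fq q)\<bar> \<le> norm (w a - w q) * norm (fq q)"
        using norm_blinfun[of "w a - w q" "fq q"] by simp
      also have "\<dots> \<le> norm (w a - w q)" using fq(1)[of q] by (simp add: mult_left_le)
      finally show ?thesis by linarith
    qed
    moreover have "norm (w q) \<ge> norm (w a) - norm (w a - w q)"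
      using norm_triangle_ineq2[of "w a" "w q"] by simp
    ultimately have "blinfun_apply (w a) (fq q) \<ge> norm (w a) - \<delta>"
      using fq(2)[of q] close by linarith
    then show "\<exists>f\<in>fq ` Q. norm (\<Sum>i<m. a i *\<^sub>R g i) - \<delta> \<le> blinfun_apply (\<Sum>i<m. a i *\<^sub>R g i) f"
      using qQ unfolding w_def by blast
  qed
qed



lemma coef_bound:
  fixes c :: "nat \<Rightarrow> real"
  assumes "j \<le> n"
  shows "\<bar>c j\<bar> \<le> 2 * Max ((\<lambda>k. \<bar>\<Sum>i=k..n. c i\<bar>) ` {..n})"
proof -
  define T where "T = Max ((\<lambda>k. \<bar>\<Sum>i=k..n. c i\<bar>) ` {..n})"
  have Tge: "\<bar>\<Sum>i=k..n. c i\<bar> \<le> T" if "k \<le> n" for k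
    unfolding T_def using that by (intro Max_ge) auto
  have "c j = (\<Sum>i=j..n. c i) - (\<Sum>i=Suc j..n. c i)"
    using assms by (simp add: sum.atLeast_Suc_atMost)
  moreover have "\<bar>\<Sum>i=Suc j..n. c i\<bar> \<le> T"
  proof (cases "Suc j \<le> n")
    case True then show ?thesis using Tge by blast
  next
    case False then have "{Suc j..n} = {}" by auto
    moreover have "0 \<le> T" using Tge[of n] abs_ge_zero[of "sum c {n..n}"] by linarith
    ultimately show ?thesis by simp
  qed
  ultimately show ?thesis using Tge[OF assms] unfolding T_def by linarith
qed

lemma key_estimate:
  fixes b :: "nat \<Rightarrow> 'a::real_normed_vector"
    and G :: "('a \<Rightarrow>\<^sub>L real) \<Rightarrow>\<^sub>L real"
  assumes norming: "\<And>k a. (\<forall>i<Suc k. \<bar>a i\<bar> \<le> 1) \<Longrightarrow> (\<exists>f. norm f \<le> 1 \<and> (\<forall>j\<ge>k. \<bar>blinfun_apply f (b j) - blinfun_apply G f\<bar> < \<eta> j) \<and>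
        blinfun_apply (\<Sum>i<Suc k. a i *\<^sub>R (if i < k then canon (b i) else G)) f
          \<ge> norm (\<Sum>i<Suc k. a i *\<^sub>R (if i < k then canon (b i) else G)) - \<theta>/2)"
    and eta: "\<And>k n. (\<Sum>j=k..n. \<eta> j) \<le> \<theta>/2"
    and kn: "k \<le> n"
  shows "norm (canon (\<Sum>j<k. c j *\<^sub>R b j) + (\<Sum>j=k..n. c j) *\<^sub>R G)
     \<le> norm (\<Sum>j\<le>n. c j *\<^sub>R b j) + 2 * \<theta> * Max ((\<lambda>k. \<bar>\<Sum>i=k..n. c i\<bar>) ` {..n})"
proof -
  define T where "T = Max ((\<lambda>k. \<bar>\<Sum>i=k..n. c i\<bar>) ` {..n})"
  define S where "S = (\<Sum>j=k..n. c j)"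
  define u where "u = (\<Sum>j<k. c j *\<^sub>R b j)"
  define Z where "Z = (\<Sum>j\<le>n. c j *\<^sub>R b j)"
  define w where "w = canon u + S *\<^sub>R G"
  have cb: "\<bar>c j\<bar> \<le> 2 * T" if "j \<le> n" for j unfolding T_def by (rule coef_bound[OF that])
  have ST: "\<bar>S\<bar> \<le> T" unfolding S_def T_def using kn by (intro Max_ge) auto
  have T0: "T \<ge> 0" using ST by linarith
  have Zsplit: "Z = u + (\<Sum>j=k..n. c j *\<^sub>R b j)"
  proof -
    have e: "{..n} = {..<k} \<union> {k..n}" using kn by auto
    show ?thesis unfolding Z_def u_def by (subst e, subst sum.union_disjoint) auto
  qed
  show ?thesis
  proof (cases "T = 0")
    case True
    then have "c j = 0" if "j \<le> n" for j using cb[OF that] by simp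
    then have "u = 0" "S = 0" unfolding u_def S_def using kn by auto
    then show ?thesis unfolding w_def using True by (simp add: S_def u_def flip: T_def)
  next
    case False
    then have Tpos: "T > 0" using T0 by simp
    define a where "a i = (if i < k then c i / (2*T) else S / (2*T))" for i
    have abd: "\<forall>i<Suc k. \<bar>a i\<bar> \<le> 1"
    proof (intro allI impI)
      fix i assume "i < Suc k"
      show "\<bar>a i\<bar> \<le> 1"
      proof (cases "i < k")
        case True then have "\<bar>c i\<bar> \<le> 2*T" using cb kn by simp
        moreover have "\<bar>c i / (2*T)\<bar> = \<bar>c i\<bar> / (2*T)" using Tpos by (simp add: abs_divide)
        ultimately show ?thesis using True Tpos unfolding a_def by (simp only: if_True pos_divide_le_eq)
      next
        case False
        have "\<bar>S / (2*T)\<bar> = \<bar>S\<bar> / (2*T)" using Tpos by (simp add: abs_divide)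
        then show ?thesis using False ST Tpos unfolding a_def by (simp only: if_False pos_divide_le_eq)
      qed
    qed
    define W where "W = (\<Sum>i<Suc k. a i *\<^sub>R (if i < k then canon (b i) else G))"
    obtain f where f1: "norm f \<le> 1" and fg: "\<forall>j\<ge>k. \<bar>blinfun_apply f (b j) - blinfun_apply G f\<bar> < \<eta> j"
      and fW: "blinfun_apply W f \<ge> norm W - \<theta>/2"
      using norming[OF abd] unfolding W_def by blast
    have "W = (\<Sum>i<k. a i *\<^sub>R canon (b i)) + a k *\<^sub>R G"
      unfolding W_def by simp
    also have "(\<Sum>i<k. a i *\<^sub>R canon (b i)) = (1/(2*T)) *\<^sub>R canon u"
      unfolding u_def canon_sum canon_scale scaleR_sum_right a_def
      by (rule sum.cong) auto
    finally have Ww: "W = (1/(2*T)) *\<^sub>R w" unfolding w_def a_def by (simp add: scaleR_add_right)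
    have nW: "norm W = norm w / (2*T)" using Tpos unfolding Ww by simp
    have aW: "blinfun_apply W f = blinfun_apply w f / (2*T)" unfolding Ww by (simp add: blinfun.scaleR_left)
    have "blinfun_apply w f / (2*T) \<ge> norm w / (2*T) - \<theta>/2" using fW nW aW by simp
    then have "(2*T) * (norm w / (2*T) - \<theta>/2) \<le> (2*T) * (blinfun_apply w f / (2*T))"
      using Tpos by (intro mult_left_mono) auto
    then have wf: "blinfun_apply w f \<ge> norm w - T * \<theta>"
      using Tpos by (simp add: right_diff_distrib)
    have "blinfun_apply f Z = blinfun_apply f u + (\<Sum>j=k..n. c j * blinfun_apply f (b j))"
      unfolding Zsplit by (simp add: blinfun.add_right blinfun.sum_right blinfun.scaleR_right)
    moreover have "blinfun_apply w f = blinfun_apply f u + (\<Sum>j=k..n. c j * blinfun_apply G f)"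
      unfolding w_def S_def by (simp add: blinfun.add_left blinfun.scaleR_left sum_distrib_right)
    ultimately have wfZ: "blinfun_apply w f = blinfun_apply f Z - (\<Sum>j=k..n. c j * (blinfun_apply f (b j) - blinfun_apply G f))"
      by (simp add: sum_subtractf right_diff_distrib)
    have "\<bar>\<Sum>j=k..n. c j * (blinfun_apply f (b j) - blinfun_apply G f)\<bar>
        \<le> (\<Sum>j=k..n. \<bar>c j * (blinfun_apply f (b j) - blinfun_apply G f)\<bar>)" by (rule sum_abs)
    also have "\<dots> \<le> (\<Sum>j=k..n. (2*T) * \<eta> j)"
    proof (rule sum_mono)
      fix j assume j: "j \<in> {k..n}"
      have "\<bar>c j * (blinfun_apply f (b j) - blinfun_apply G f)\<bar> = \<bar>c j\<bar> * \<bar>blinfun_apply f (b j) - blinfun_apply G f\<bar>"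
        by (simp add: abs_mult)
      also have "\<dots> \<le> (2*T) * \<eta> j"
        using j cb[of j] fg by (intro mult_mono) auto
      finally show "\<bar>c j * (blinfun_apply f (b j) - blinfun_apply G f)\<bar> \<le> (2*T) * \<eta> j" .
    qed
    also have "\<dots> = (2*T) * (\<Sum>j=k..n. \<eta> j)" by (simp add: sum_distrib_left)
    also have "\<dots> \<le> (2*T) * (\<theta>/2)" using eta Tpos by (intro mult_left_mono) auto
    finally have err: "\<bar>\<Sum>j=k..n. c j * (blinfun_apply f (b j) - blinfun_apply G f)\<bar> \<le> T * \<theta>" by simp
    have fZ: "blinfun_apply f Z \<le> norm Z"
    proof -
      have "\<bar>blinfun_apply f Z\<bar> \<le> norm f * norm Z" using norm_blinfun[of f Z] by simp
      also have "\<dots> \<le> norm Z" using f1 by (simp add: mult_left_le_one_le)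
      finally show ?thesis by simp
    qed
    have "norm w \<le> norm Z + 2 * \<theta> * T" using wf wfZ err fZ abs_ge_self[of "\<Sum>j=k..n. c j * (blinfun_apply f (b j) - blinfun_apply G f)"]
      by (simp add: mult.commute mult.left_commute)
    then show ?thesis unfolding w_def u_def S_def Z_def T_def by simp
  qed
qed



lemma lower_bound_w:
  assumes dle: "\<And>y. d \<le> norm (G - canon y)" and d0: "d \<ge> 0"
  shows "\<bar>s\<bar> * d \<le> norm (canon u + s *\<^sub>R G)"
proof (cases "s = 0")
  case True then show ?thesis by simp
next
  case False
  have "canon u + s *\<^sub>R G = s *\<^sub>R (G - canon (- ((1/s) *\<^sub>R u)))"
    using False by (simp add: canon_minus canon_scale algebra_simps)
  then have "norm (canon u + s *\<^sub>R G) = \<bar>s\<bar> * norm (G - canon (- ((1/s) *\<^sub>R u)))" by simp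
  moreover have "\<bar>s\<bar> * d \<le> \<bar>s\<bar> * norm (G - canon (- ((1/s) *\<^sub>R u)))"
    using dle by (intro mult_left_mono) auto
  ultimately show ?thesis by simp
qed

lemma arith1:
  fixes d \<theta> \<epsilon> :: real
  assumes "d > 0" "\<theta> > 0" "\<theta> \<le> d/4" "\<theta> \<le> \<epsilon>*d^2/4" "\<epsilon> > 0"
  shows "1 / (d - 2*\<theta>) \<le> 1/d + \<epsilon>"
proof -
  define D where "D = d - 2*\<theta>"
  have D: "D \<ge> d/2" using assms unfolding D_def by simp
  have Dp: "D > 0" using D assms by simp
  have "\<epsilon> * d * D \<ge> \<epsilon> * d * (d/2)" using D assms by (intro mult_left_mono) auto
  moreover have "\<epsilon> * d * (d/2) = 2 * (\<epsilon>*d^2/4)" by (simp add: power2_eq_square)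
  ultimately have "2*\<theta> \<le> \<epsilon> * d * D" using assms by linarith
  then have "d \<le> D + \<epsilon> * d * D" unfolding D_def by simp
  then have "d \<le> (1/d + \<epsilon>) * (d * D)" using assms by (simp add: algebra_simps)
  then show ?thesis using Dp assms unfolding D_def[symmetric]
    by (simp add: pos_divide_le_eq mult.commute mult.left_commute)
qed

lemma arith2:
  fixes d \<theta> \<epsilon> A :: real
  assumes "d > 0" "\<theta> > 0" "\<theta> \<le> d/4" "\<theta> \<le> \<epsilon>*d^2/(2*(d+A))" "\<epsilon> > 0" "A \<ge> 0"
  shows "(2*\<theta> + A) / (d - 2*\<theta>) \<le> A/d + 2*\<epsilon>"
proof -
  define D where "D = d - 2*\<theta>"
  have D: "D \<ge> d/2" using assms unfolding D_def by simp
  have Dp: "D > 0" using D assms by simp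
  have dA: "d + A > 0" using assms by simp
  have t: "2*\<theta>*(d+A) \<le> \<epsilon>*d^2" using assms(4) dA by (simp add: field_simps)
  have "2*\<epsilon>*d*D \<ge> 2*\<epsilon>*d*(d/2)" using D assms by (intro mult_left_mono) auto
  moreover have "2*\<epsilon>*d*(d/2) = \<epsilon>*d^2" by (simp add: power2_eq_square)
  ultimately have "2*\<theta>*(d+A) \<le> 2*\<epsilon>*d*D" using t by linarith
  then have "(2*\<theta> + A) * d \<le> (A + 2*\<epsilon>*d) * D" unfolding D_def by (simp add: algebra_simps)
  then have "(2*\<theta> + A) \<le> (A/d + 2*\<epsilon>) * D"
    using assms by (simp add: field_simps)
  then show ?thesis using Dp unfolding D_def[symmetric] by (simp add: pos_divide_le_eq)
qed

lemma wide_from_key: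
  fixes b :: "nat \<Rightarrow> 'a::real_normed_vector"
    and G :: "('a \<Rightarrow>\<^sub>L real) \<Rightarrow>\<^sub>L real"
  assumes key: "\<And>n c k. k \<le> n \<Longrightarrow> norm (canon (\<Sum>j<k. c j *\<^sub>R b j) + (\<Sum>j=k..n. c j) *\<^sub>R G)
     \<le> norm (\<Sum>j\<le>n. c j *\<^sub>R b j) + 2 * \<theta> * Max ((\<lambda>k. \<bar>\<Sum>i=k..n. c i\<bar>) ` {..n})"
    and dle: "\<And>y. d \<le> norm (G - canon y)"
    and dpos: "d > 0" and th: "\<theta> > 0" "\<theta> \<le> d/4" "\<theta> \<le> \<epsilon>*d^2/4" "\<theta> \<le> \<epsilon>*d^2/(2*(d+norm G))"
    and ep: "\<epsilon> > 0"
    and g1: "1/d \<le> \<gamma>" and g2: "(norm G + d)/(2*d) \<le> \<gamma>"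
    and bn: "\<And>j. norm (b j) \<le> \<gamma> + \<epsilon>"
  shows "wide_s (\<gamma> + \<epsilon>) b"
proof -
  define lam where "lam = \<gamma> + \<epsilon>"
  define A where "A = norm G"
  define D where "D = d - 2*\<theta>"
  have Dp: "D > 0" using th dpos unfolding D_def by simp
  have c0: "canon (0::'a) = 0" by (rule blinfun_eqI) simp
  have Ad: "A \<ge> d" using dle[of 0] c0 unfolding A_def by simp
  have i1: "1/D \<le> lam" using arith1[OF dpos th(1) th(2) th(3) ep] g1 unfolding D_def lam_def by linarith
  have i2: "1 + (2*\<theta> + A)/D \<le> 2*lam"
  proof -
    have "(2*\<theta> + A)/D \<le> A/d + 2*\<epsilon>" using arith2[OF dpos th(1) th(2) _ ep, of A] th(4) Ad dpos
      unfolding D_def A_def by simp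
    moreover have "1 + A/d = 2 * ((A + d)/(2*d))" using dpos by (simp add: field_simps)
    moreover have "2 * ((A + d)/(2*d)) \<le> 2 * \<gamma>" using g2 unfolding A_def by (simp only: mult_le_cancel_left) simp
    ultimately have "1 + (2*\<theta> + A)/D \<le> 1 + (A/d + 2*\<epsilon>) \<and> 1 + A/d \<le> 2*\<gamma>" by (simp add: A_def)
    then show ?thesis unfolding lam_def by (simp add: algebra_simps)
  qed
  have main: "(\<forall>k\<le>n. \<bar>\<Sum>j=k..n. c j\<bar> \<le> lam * norm (\<Sum>j\<le>n. c j *\<^sub>R b j)) \<and>
      (\<forall>k\<le>n. norm (\<Sum>j<k. c j *\<^sub>R b j) \<le> 2 * lam * norm (\<Sum>j\<le>n. c j *\<^sub>R b j))" for n c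
  proof -
    define T where "T = Max ((\<lambda>k. \<bar>\<Sum>i=k..n. c i\<bar>) ` {..n})"
    define Z where "Z = (\<Sum>j\<le>n. c j *\<^sub>R b j)"
    have keyk: "norm (canon (\<Sum>j<k. c j *\<^sub>R b j) + (\<Sum>j=k..n. c j) *\<^sub>R G) \<le> norm Z + 2*\<theta>*T" if "k \<le> n" for k
      using key[OF that] unfolding T_def Z_def .
    have Sk: "\<bar>\<Sum>j=k..n. c j\<bar> * d \<le> norm Z + 2*\<theta>*T" if "k \<le> n" for k
      using lower_bound_w[OF dle, of "\<Sum>j=k..n. c j" "\<Sum>j<k. c j *\<^sub>R b j"] dpos keyk[OF that] by simp
    have "T \<in> (\<lambda>k. \<bar>\<Sum>i=k..n. c i\<bar>) ` {..n}" unfolding T_def by (intro Max_in) auto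
    then obtain k0 where "k0 \<le> n" and Tk0: "T = \<bar>\<Sum>i=k0..n. c i\<bar>" by auto
    then have "T * d \<le> norm Z + 2*\<theta>*T" using Sk by simp
    then have TD: "T * D \<le> norm Z" unfolding D_def by (simp add: algebra_simps)
    have T0: "T \<ge> 0" using Tk0 by simp
    have TZ: "T \<le> norm Z / D" using TD Dp by (simp add: pos_le_divide_eq)
    also have "norm Z / D = (1/D) * norm Z" by simp
    also have "\<dots> \<le> lam * norm Z" using i1 by (intro mult_right_mono) auto
    finally have Tl: "T \<le> lam * norm Z" .
    have STk: "\<bar>\<Sum>j=k..n. c j\<bar> \<le> T" if "k \<le> n" for k
      unfolding T_def using that by (intro Max_ge) auto
    have part2: "norm (\<Sum>j<k. c j *\<^sub>R b j) \<le> 2 * lam * norm Z" if "k \<le> n" for k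
    proof -
      define u where "u = (\<Sum>j<k. c j *\<^sub>R b j)"
      define s where "s = (\<Sum>j=k..n. c j)"
      have "norm u = norm (canon u)" by simp
      also have "canon u = (canon u + s *\<^sub>R G) - s *\<^sub>R G" by simp
      also have "norm \<dots> \<le> norm (canon u + s *\<^sub>R G) + norm (s *\<^sub>R G)" by (rule norm_triangle_ineq4)
      also have "norm (s *\<^sub>R G) = \<bar>s\<bar> * A" unfolding A_def by simp
      also have "\<bar>s\<bar> * A \<le> T * A" using STk[OF that] unfolding s_def A_def by (intro mult_right_mono) auto
      finally have "norm u \<le> norm Z + 2*\<theta>*T + T * A" using keyk[OF that] unfolding u_def s_def by linarith
      also have "\<dots> = norm Z + (2*\<theta> + A) * T" by (simp add: algebra_simps)
      also have "(2*\<theta> + A) * T \<le> (2*\<theta> + A) * (norm Z / D)"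
        using TZ th Ad dpos by (intro mult_left_mono) auto
      also have "(2*\<theta> + A) * (norm Z / D) = ((2*\<theta> + A) / D) * norm Z" by simp
      finally have "norm u \<le> (1 + (2*\<theta> + A) / D) * norm Z" by (simp add: algebra_simps)
      also have "\<dots> \<le> 2 * lam * norm Z" using i2 by (intro mult_right_mono) auto
      finally show ?thesis unfolding u_def .
    qed
    show ?thesis using STk Tl part2 unfolding Z_def by (meson order_trans)
  qed
  have basic: "is_basic (2 * lam) b"
    unfolding is_basic_def
  proof (intro allI impI)
    fix c :: "nat \<Rightarrow> real" and k assume sm: "summable (\<lambda>j. c j *\<^sub>R b j)"
    define P where "P n = (\<Sum>j<n. c j *\<^sub>R b j)" for n
    have "P \<longlonglongrightarrow> (\<Sum>j. c j *\<^sub>R b j)" unfolding P_def using summable_LIMSEQ[OF sm] .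
    then have lim: "(\<lambda>n. 2 * lam * norm (P n)) \<longlonglongrightarrow> 2 * lam * norm (\<Sum>j. c j *\<^sub>R b j)"
      by (intro tendsto_mult_left tendsto_norm)
    show "norm (\<Sum>j<k. c j *\<^sub>R b j) \<le> 2 * lam * norm (\<Sum>j. c j *\<^sub>R b j)"
    proof (rule LIMSEQ_le_const[OF lim], intro exI allI impI)
      fix n assume "n \<ge> Suc k"
      then obtain m where m: "n = Suc m" "k \<le> m" by (cases n) auto
      have "P n = (\<Sum>j\<le>m. c j *\<^sub>R b j)" unfolding P_def m(1) lessThan_Suc_atMost ..
      then show "norm (\<Sum>j<k. c j *\<^sub>R b j) \<le> 2 * lam * norm (P n)" using main[of m c] m(2) by simp
    qed
  qed
  show ?thesis
    unfolding wide_s_def lam_def[symmetric]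
    using basic bn main unfolding lam_def by blast
qed



primrec seqs :: "(nat list \<Rightarrow> nat) \<Rightarrow> nat \<Rightarrow> nat list" where
  "seqs p 0 = []"
| "seqs p (Suc n) = seqs p n @ [p (seqs p n)]"

lemma seqs_map: "seqs p n = map (\<lambda>i. p (seqs p i)) [0..<n]"
  by (induction n) auto

lemma geo_half: "(\<Sum>j<n. (1/2::real)^(Suc j)) = 1 - (1/2)^n"
  by (induction n) (auto simp: field_simps)

lemma geo_half_le: "(\<Sum>j=k..n. (1/2::real)^(Suc j)) \<le> 1"
proof -
  have "(\<Sum>j=k..n. (1/2::real)^(Suc j)) \<le> (\<Sum>j<Suc n. (1/2::real)^(Suc j))"
    by (rule sum_mono2) auto
  also have "\<dots> \<le> 1" unfolding geo_half by simp
  finally show ?thesis .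
qed

theorem mainTheorem8:
  fixes x :: "nat \<Rightarrow> 'a::banach"
    and G :: "('a \<Rightarrow>\<^sub>L real) \<Rightarrow>\<^sub>L real"
  assumes "bounded (range x)"
    and "weak_star_cluster_point x G"
    and "G \<notin> range canon"
  shows "\<forall>\<epsilon>>0. \<exists>r. strict_mono r \<and>
           wide_s (max (1 / dist_to_X G)
                     (max ((norm G + dist_to_X G) / (2 * dist_to_X G)) (SUP j. norm (x j))) + \<epsilon>)
                  (x \<circ> r)"
proof (intro allI impI)
  fix \<epsilon> :: real assume ep: "\<epsilon> > 0"
  define d where "d = dist_to_X G"
  define \<gamma> where "\<gamma> = max (1 / dist_to_X G) (max ((norm G + dist_to_X G) / (2 * dist_to_X G)) (SUP j. norm (x j)))"
  have dpos: "d > 0" unfolding d_def using dist_to_X_pos[OF assms(3)] .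
  have dle: "\<And>y. d \<le> norm (G - canon y)" unfolding d_def by (rule dist_to_X_le)
  have bdd: "bdd_above (range (\<lambda>j. norm (x j)))"
    using assms(1) unfolding bounded_iff bdd_above_def by auto
  have g1: "1/d \<le> \<gamma>" and g2: "(norm G + d)/(2*d) \<le> \<gamma>" unfolding \<gamma>_def d_def by auto
  have bn: "norm (x j) \<le> \<gamma> + \<epsilon>" for j
  proof -
    have "norm (x j) \<le> (SUP j. norm (x j))" by (rule cSUP_upper[OF _ bdd]) simp
    also have "\<dots> \<le> \<gamma>" unfolding \<gamma>_def by simp
    finally show ?thesis using ep by simp
  qed
  define \<theta> where "\<theta> = min (d/4) (min (\<epsilon>*d^2/4) (\<epsilon>*d^2/(2*(d+norm G))))"
  have dG: "d + norm G > 0" using dpos by (simp add: add_pos_nonneg)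
  have th: "\<theta> > 0" "\<theta> \<le> d/4" "\<theta> \<le> \<epsilon>*d^2/4" "\<theta> \<le> \<epsilon>*d^2/(2*(d+norm G))"
    unfolding \<theta>_def
    subgoal using dpos ep dG by auto
    subgoal by (rule min.cobounded1)
    subgoal by (intro min.coboundedI2 min.cobounded1)
    subgoal by (intro min.coboundedI2 min.cobounded2)
    done
  define \<eta> where "\<eta> j = \<theta>/2 * (1/2)^(Suc j)" for j :: nat
  have etapos: "\<eta> j > 0" for j unfolding \<eta>_def using th by simp
  have eta: "(\<Sum>j=k..n. \<eta> j) \<le> \<theta>/2" for k n
  proof -
    have "(\<Sum>j=k..n. \<eta> j) = \<theta>/2 * (\<Sum>j=k..n. (1/2::real)^(Suc j))"
      unfolding \<eta>_def by (simp add: sum_distrib_left)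
    also have "\<dots> \<le> \<theta>/2 * 1" using th geo_half_le by (intro mult_left_mono) auto
    finally show ?thesis by simp
  qed
  define gv where "gv l i = (if i < length l then canon (x (l!i)) else G)" for l :: "nat list" and i
  define NSP where "NSP l F \<longleftrightarrow> finite F \<and> (\<forall>f\<in>F. norm f \<le> 1) \<and>
    (\<forall>a. (\<forall>i<Suc (length l). \<bar>a i\<bar> \<le> 1) \<longrightarrow>
      (\<exists>f\<in>F. blinfun_apply (\<Sum>i<Suc (length l). a i *\<^sub>R gv l i) f \<ge> norm (\<Sum>i<Suc (length l). a i *\<^sub>R gv l i) - \<theta>/2))"
    for l F
  define NS where "NS l = (SOME F. NSP l F)" for l
  have NSp: "NSP l (NS l)" for l
  proof -
    have "\<exists>F. NSP l F" unfolding NSP_def using norming_set[where \<delta>="\<theta>/2" and g="gv l" and m="Suc (length l)"] th by simp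
    then show ?thesis unfolding NS_def by (rule someI_ex)
  qed
  define Fs where "Fs l = (\<Union>k\<in>{..length l}. NS (take k l))" for l
  have Fsfin: "finite (Fs l)" for l unfolding Fs_def using NSp unfolding NSP_def by auto
  define Pp where "Pp l j \<longleftrightarrow> j \<ge> Suc (Max (insert 0 (set l))) \<and>
     (\<forall>f\<in>Fs l. \<bar>blinfun_apply f (x j) - blinfun_apply G f\<bar> < \<eta> (length l))" for l j
  define p where "p l = (SOME j. Pp l j)" for l
  have pP: "Pp l (p l)" for l
  proof -
    have "\<exists>j\<ge>Suc (Max (insert 0 (set l))). \<forall>f\<in>Fs l. \<bar>blinfun_apply f (x j) - blinfun_apply G f\<bar> < \<eta> (length l)"
      using assms(2) Fsfin etapos unfolding weak_star_cluster_point_def by blast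
    then have "\<exists>j. Pp l j" unfolding Pp_def by blast
    then show ?thesis unfolding p_def by (rule someI_ex)
  qed
  define r where "r i = p (seqs p i)" for i
  have seqr: "seqs p n = map r [0..<n]" for n unfolding r_def by (rule seqs_map)
  have rP: "Pp (map r [0..<n]) (r n)" for n using pP[of "seqs p n"] unfolding seqr r_def[symmetric]
    by (simp add: r_def seqr)
  have smono: "strict_mono r"
    unfolding strict_mono_Suc_iff
  proof
    fix n
    have "r n \<le> Max (insert 0 (set (map r [0..<Suc n])))" by (intro Max_ge) auto
    moreover have "Suc (Max (insert 0 (set (map r [0..<Suc n])))) \<le> r (Suc n)"
      using rP[of "Suc n"] unfolding Pp_def by blast
    ultimately show "r n < r (Suc n)" by linarith
  qed
  define b where "b = x \<circ> r"
  have norming: "\<exists>f. norm f \<le> 1 \<and> (\<forall>j\<ge>k. \<bar>blinfun_apply f (b j) - blinfun_apply G f\<bar> < \<eta> j) \<and>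
        blinfun_apply (\<Sum>i<Suc k. a i *\<^sub>R (if i < k then canon (b i) else G)) f
          \<ge> norm (\<Sum>i<Suc k. a i *\<^sub>R (if i < k then canon (b i) else G)) - \<theta>/2"
    if abd: "\<forall>i<Suc k. \<bar>a i\<bar> \<le> 1" for k a
  proof -
    define l where "l = map r [0..<k]"
    have ll: "length l = k" unfolding l_def by simp
    have gvl: "gv l i = (if i < k then canon (b i) else G)" for i
      unfolding gv_def l_def b_def by simp
    obtain f where fNS: "f \<in> NS l" and fW: "blinfun_apply (\<Sum>i<Suc k. a i *\<^sub>R gv l i) f \<ge> norm (\<Sum>i<Suc k. a i *\<^sub>R gv l i) - \<theta>/2"
      using NSp[of l] abd ll unfolding NSP_def by auto
    have f1: "norm f \<le> 1" using NSp[of l] fNS unfolding NSP_def by auto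
    have fg: "\<bar>blinfun_apply f (b j) - blinfun_apply G f\<bar> < \<eta> j" if "j \<ge> k" for j
    proof -
      have "take k (map r [0..<j]) = l" unfolding l_def using that by (simp add: take_map)
      then have "f \<in> Fs (map r [0..<j])" unfolding Fs_def using fNS that by force
      then show ?thesis using rP[of j] unfolding Pp_def b_def by simp
    qed
    show ?thesis using f1 fg fW unfolding gvl by blast
  qed
  have key: "norm (canon (\<Sum>j<k. c j *\<^sub>R b j) + (\<Sum>j=k..n. c j) *\<^sub>R G)
     \<le> norm (\<Sum>j\<le>n. c j *\<^sub>R b j) + 2 * \<theta> * Max ((\<lambda>k. \<bar>\<Sum>i=k..n. c i\<bar>) ` {..n})" if "k \<le> n" for n c k
    by (rule key_estimate[OF norming eta that])
  have "wide_s (\<gamma> + \<epsilon>) b"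
    by (rule wide_from_key[OF key dle dpos th ep g1 g2]) (use bn in \<open>auto simp: b_def\<close>)
  then show "\<exists>r. strict_mono r \<and> wide_s (\<gamma> + \<epsilon>) (x \<circ> r)"
    using smono unfolding b_def by blast
qed

end
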